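(* Let $P,Q,R,S$ be the four vertices of a hinge (faces $PQS$ and $RQS$ sharing the diagonal $QS$), with radii $p,q,r,s>0$ at $P,Q,R,S$ and inversive distances $a,b,c,d,e>1$ on the edges $PQ,QR,RS,SP,QS$ respectively. Define the lengths $PQ=\sqrt{p^2+q^2+2apq}$, $QR=\sqrt{q^2+r^2+2bqr}$, $RS=\sqrt{r^2+s^2+2crs}$, $SP=\sqrt{s^2+p^2+2dsp}$, $QS=\sqrt{q^2+s^2+2eqs}$. Let $\Delta_{xyz}=x^2+y^2+z^2+2xyz-1$ and \[f=\frac{ab+cd+ace+bde+\sqrt{\Delta_{ade}}\sqrt{\Delta_{bce}}}{e^2-1}.\] Suppose \[\frac{\sqrt{\Delta_{bce}}}{p}+\frac{\sqrt{\Delta_{ade}}}{r}\le\frac{\sqrt{\Delta_{cdf}}}{q}+\frac{\sqrt{\Delta_{abf}}}{s}.\] If $QR<QS+SR$ and $SR<QS+QR$, then $PQ+PS>QS$. *)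

theory Defs
  imports Complex_Main
begin

definition Delta :: "real \<Rightarrow> real \<Rightarrow> real \<Rightarrow> real" where
  "Delta x y z = x^2 + y^2 + z^2 + 2*x*y*z - 1"

definition edge_len :: "real \<Rightarrow> real \<Rightarrow> real \<Rightarrow> real" where
  "edge_len u v I = sqrt (u^2 + v^2 + 2*I*u*v)"

end

theory Submission
  imports Defs
begin

lemma I1:
  fixes a b c d e al be :: real
  assumes "al^2 = a^2+d^2+e^2+2*a*d*e-1" "be^2 = b^2+c^2+e^2+2*b*c*e-1"
  shows "((c^2+d^2-1)*(e^2-1)^2 + (a*b+c*d+a*c*e+b*d*e+al*be)^2 + 2*c*d*(a*b+c*d+a*c*e+b*d*e+al*be)*(e^2-1))
     = (al*(b+c*e)+be*(a+d*e))^2"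
  using assms by algebra

lemma I2:
  fixes a b c d e al be :: real
  assumes "al^2 = a^2+d^2+e^2+2*a*d*e-1" "be^2 = b^2+c^2+e^2+2*b*c*e-1"
  shows "((a^2+b^2-1)*(e^2-1)^2 + (a*b+c*d+a*c*e+b*d*e+al*be)^2 + 2*a*b*(a*b+c*d+a*c*e+b*d*e+al*be)*(e^2-1))
     = (al*(c+b*e)+be*(d+a*e))^2"
  using assms by algebra

lemma Id:
  fixes p q s a d e al :: real
  assumes "al^2 = a^2+d^2+e^2+2*a*d*e-1"
  shows "(e^2-1)*((p^2+q^2+2*a*p*q)*(p^2+s^2+2*d*p*s) - (e*q*s-p^2-a*p*q-d*p*s)^2)
   = al^2*(q^2+s^2+2*e*q*s)*p^2 - ((e^2-1)*q*s - ((a+d*e)*s+(d+a*e)*q)*p)^2"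
  using assms by algebra

lemma Delta_pos: "x > 1 \<Longrightarrow> y > 1 \<Longrightarrow> z > 1 \<Longrightarrow> Delta x y z > 0"
proof -
  assume x: "x > 1" and y: "y > 1" and z: "z > 1"
  have "x^2 > 1" using x by (simp add: one_less_power)
  moreover have "y^2 > 0" "z^2 > 0" using y z by simp_all
  moreover have "x*y*z > 0" using x y z by simp
  ultimately show ?thesis unfolding Delta_def by linarith
qed

lemma rho:
  fixes t q s a d e :: real
  assumes t: "t > 0" and q: "q > 0" and s: "s > 0" and a: "a > 1" and d: "d > 1" and e: "e > 1"
    and K: "e*q*s - t^2 - a*t*q - d*t*s > 0"
  shows "(e^2-1)*q*s/t > ((a+d*e)*s+(d+a*e)*q) - sqrt (Delta a d e) * sqrt (q^2+s^2+2*e*q*s)"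
proof -
  define B where "B = a*q + d*s"
  define u where "u = (a+d*e)*s+(d+a*e)*q"
  define al where "al = sqrt (Delta a d e)"
  define QS where "QS = sqrt (q^2+s^2+2*e*q*s)"
  define E where "E = e^2 - 1"
  have E0: "E > 0" unfolding E_def using e by (simp add: one_less_power)
  have B0: "B > 0" unfolding B_def using a d q s by (simp add: add_pos_pos)
  have eqs: "e*q*s > 0" using e q s by simp
  define rt where "rt = sqrt (B^2 + 4*(e*q*s))"
  have rt2: "rt^2 = B^2 + 4*(e*q*s)" unfolding rt_def using eqs B0 by simp
  have "sqrt (B^2) < rt" unfolding rt_def using eqs by (intro real_sqrt_less_mono) simp
  then have rtB: "rt > B" using B0 by simp
  define pr where "pr = (rt - B)/2"
  have pr0: "pr > 0" unfolding pr_def using rtB by simp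
  have prq: "pr^2 + B*pr = e*q*s" unfolding pr_def using rt2 by (simp add: power2_eq_square field_simps)
  have tB: "t^2 + B*t < e*q*s" using K unfolding B_def by (simp add: algebra_simps power2_eq_square)
  have tpr: "t < pr"
  proof (rule ccontr)
    assume "\<not> t < pr"
    then have "pr \<le> t" by simp
    then have "pr^2 + B*pr \<le> t^2 + B*t" using pr0 B0
      by (intro add_mono power_mono mult_left_mono) auto
    then show False using tB prq by simp
  qed
  have al2: "al^2 = a^2+d^2+e^2+2*a*d*e-1" unfolding al_def
    using Delta_pos[OF a d e] by (simp add: Delta_def)
  have Kpr: "e*q*s-pr^2-a*pr*q-d*pr*s = 0" using prq unfolding B_def by (simp add: algebra_simps)
  have "a*pr*q > 0" "d*pr*s > 0" "pr^2 > 0" "q^2 > 0" "s^2 > 0" using pr0 q a s d by simp_all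
  then have L1: "pr^2+q^2+2*a*pr*q > 0" and L2: "pr^2+s^2+2*d*pr*s > 0" by linarith+
  have "E*((pr^2+q^2+2*a*pr*q)*(pr^2+s^2+2*d*pr*s) - (e*q*s-pr^2-a*pr*q-d*pr*s)^2) > 0"
    using E0 L1 L2 Kpr by simp
  moreover have "QS^2 = q^2+s^2+2*e*q*s" unfolding QS_def using eqs q s
  proof (intro real_sqrt_pow2)
    have "2*e*q*s = 2*(e*q*s)" by simp
    moreover have "q^2 \<ge> 0" "s^2 \<ge> 0" by simp_all
    ultimately show "0 \<le> q^2+s^2+2*e*q*s" using eqs by linarith
  qed
  ultimately have "al^2*QS^2*pr^2 - (E*q*s - u*pr)^2 > 0"
    using Id[OF al2, of pr q s] unfolding E_def u_def by simp
  then have sq: "(E*q*s - u*pr)^2 < (al*QS*pr)^2" by (simp add: power_mult_distrib)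
  have al0: "al > 0" unfolding al_def using Delta_pos[OF a d e] by simp
  have QSnn: "0 \<le> q^2+s^2+2*e*q*s"
  proof -
    have "2*e*q*s = 2*(e*q*s)" by simp
    moreover have "q^2 \<ge> 0" "s^2 \<ge> 0" by simp_all
    ultimately show "0 \<le> q^2+s^2+2*e*q*s" using eqs by linarith
  qed
  have QS0: "QS \<ge> 0" unfolding QS_def using QSnn by simp
  have alQS: "al*QS*pr \<ge> 0" using pr0 al0 QS0 by simp
  have "E*q*s - u*pr > -(al*QS*pr)"
  proof (rule ccontr)
    assume "\<not> ?thesis"
    then have "al*QS*pr \<le> -(E*q*s - u*pr)" by simp
    then have "(al*QS*pr)^2 \<le> (-(E*q*s - u*pr))^2" using alQS by (rule power_mono)
    moreover have "(-(E*q*s - u*pr))^2 = (E*q*s - u*pr)^2" by (rule power2_minus)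
    ultimately show False using sq by linarith
  qed
  then have "E*q*s/pr > u - al*QS" using pr0 by (simp add: field_simps)
  moreover have "E*q*s/t > E*q*s/pr" using t tpr E0 q s
    by (simp add: divide_strict_left_mono)
  ultimately show ?thesis unfolding E_def u_def al_def QS_def by simp
qed

lemma basics:
  fixes t q s a d e :: real
  assumes t: "t > 0" and q: "q > 0" and s: "s > 0" and a: "a > 1" and d: "d > 1" and e: "e > 1"
  shows "t^2+q^2+2*a*t*q > 0" "t^2+s^2+2*d*t*s > 0" "q^2+s^2+2*e*q*s > 0"
proof -
  have "a*t*q > 0" "d*t*s > 0" "e*q*s > 0" "t^2 > 0" "q^2 > 0" "s^2 > 0" using assms by simp_all
  moreover have "2*a*t*q = 2*(a*t*q)" "2*d*t*s = 2*(d*t*s)" "2*e*q*s = 2*(e*q*s)" by simp_all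
  ultimately show "t^2+q^2+2*a*t*q > 0" "t^2+s^2+2*d*t*s > 0" "q^2+s^2+2*e*q*s > 0" by linarith+
qed

lemma lemA:
  fixes t q s a d e :: real
  assumes t: "t > 0" and q: "q > 0" and s: "s > 0" and a: "a > 1" and d: "d > 1" and e: "e > 1"
    and H: "sqrt (t^2+q^2+2*a*t*q) + sqrt (t^2+s^2+2*d*t*s) \<le> sqrt (q^2+s^2+2*e*q*s)"
  shows "(e^2-1)*q*s/t \<ge> ((a+d*e)*s+(d+a*e)*q) + sqrt (Delta a d e) * sqrt (q^2+s^2+2*e*q*s)"
proof -
  define u where "u = (a+d*e)*s+(d+a*e)*q"
  define al where "al = sqrt (Delta a d e)"
  define QS where "QS = sqrt (q^2+s^2+2*e*q*s)"
  define L1 where "L1 = sqrt (t^2+q^2+2*a*t*q)"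
  define L2 where "L2 = sqrt (t^2+s^2+2*d*t*s)"
  define E where "E = e^2 - 1"
  define K where "K = e*q*s-t^2-a*t*q-d*t*s"
  note bs = basics[OF t q s a d e]
  have L1s: "L1^2 = t^2+q^2+2*a*t*q" unfolding L1_def using bs by simp
  have L2s: "L2^2 = t^2+s^2+2*d*t*s" unfolding L2_def using bs by simp
  have QSs: "QS^2 = q^2+s^2+2*e*q*s" unfolding QS_def using bs by simp
  have L10: "L1 > 0" unfolding L1_def using bs by simp
  have L20: "L2 > 0" unfolding L2_def using bs by simp
  have al0: "al > 0" unfolding al_def using Delta_pos[OF a d e] by simp
  have QS0: "QS > 0" unfolding QS_def using bs by simp
  have E0: "E > 0" unfolding E_def using e by (simp add: one_less_power)
  have al2: "al^2 = a^2+d^2+e^2+2*a*d*e-1" unfolding al_def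
    using Delta_pos[OF a d e] by (simp add: Delta_def)
  have "(L1+L2)^2 \<le> QS^2" using H L10 L20 unfolding L1_def L2_def QS_def
    by (intro power_mono) auto
  then have "L1^2 + L2^2 + 2*(L1*L2) \<le> QS^2" by (simp add: power2_sum)
  then have KL: "K \<ge> L1*L2" using L1s L2s QSs unfolding K_def by (simp add: algebra_simps)
  have LL0: "L1*L2 > 0" using L10 L20 by simp
  have "(L1*L2)^2 \<le> K^2" using KL LL0 by (intro power_mono) auto
  then have "L1^2*L2^2 - K^2 \<le> 0" by (simp add: power_mult_distrib)
  then have "E*(L1^2*L2^2 - K^2) \<le> 0" using E0 by (simp add: mult_nonneg_nonpos)
  then have "al^2*QS^2*t^2 - (E*q*s - u*t)^2 \<le> 0"
    using Id[OF al2, of t q s] unfolding E_def u_def K_def L1s L2s QSs by simp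
  then have sq: "(al*QS*t)^2 \<le> (E*q*s - u*t)^2" by (simp add: power_mult_distrib)
  have "K > 0" using KL LL0 by linarith
  then have "E*q*s/t > u - al*QS"
    using rho[OF t q s a d e] unfolding K_def E_def u_def al_def QS_def by simp
  then have gt: "E*q*s - u*t > -(al*QS*t)" using t by (simp add: field_simps)
  have alQS: "al*QS*t \<ge> 0" using t al0 QS0 by simp
  have "E*q*s - u*t \<ge> al*QS*t"
  proof (rule ccontr)
    assume "\<not> ?thesis"
    then have "\<bar>E*q*s - u*t\<bar> < al*QS*t" using gt by linarith
    then have "\<bar>E*q*s - u*t\<bar>^2 < (al*QS*t)^2" by (intro power_strict_mono) auto
    then show False using sq by simp
  qed
  then have "E*q*s/t \<ge> u + al*QS" using t by (simp add: field_simps)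
  then show ?thesis unfolding E_def u_def al_def QS_def by simp
qed


lemma lemB:
  fixes t q s a d e :: real
  assumes t: "t > 0" and q: "q > 0" and s: "s > 0" and a: "a > 1" and d: "d > 1" and e: "e > 1"
    and H1: "sqrt (t^2+q^2+2*a*t*q) < sqrt (q^2+s^2+2*e*q*s) + sqrt (t^2+s^2+2*d*t*s)"
    and H2: "sqrt (t^2+s^2+2*d*t*s) < sqrt (q^2+s^2+2*e*q*s) + sqrt (t^2+q^2+2*a*t*q)"
  shows "(e^2-1)*q*s/t > ((a+d*e)*s+(d+a*e)*q) - sqrt (Delta a d e) * sqrt (q^2+s^2+2*e*q*s)"
proof (rule ccontr)
  assume nc: "\<not> ?thesis"
  define u where "u = (a+d*e)*s+(d+a*e)*q"
  define al where "al = sqrt (Delta a d e)"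
  define QS where "QS = sqrt (q^2+s^2+2*e*q*s)"
  define L1 where "L1 = sqrt (t^2+q^2+2*a*t*q)"
  define L2 where "L2 = sqrt (t^2+s^2+2*d*t*s)"
  define E where "E = e^2 - 1"
  define K where "K = e*q*s-t^2-a*t*q-d*t*s"
  note bs = basics[OF t q s a d e]
  have L1s: "L1^2 = t^2+q^2+2*a*t*q" unfolding L1_def using bs by simp
  have L2s: "L2^2 = t^2+s^2+2*d*t*s" unfolding L2_def using bs by simp
  have QSs: "QS^2 = q^2+s^2+2*e*q*s" unfolding QS_def using bs by simp
  have L10: "L1 > 0" unfolding L1_def using bs by simp
  have L20: "L2 > 0" unfolding L2_def using bs by simp
  have al0: "al > 0" unfolding al_def using Delta_pos[OF a d e] by simp
  have QS0: "QS > 0" unfolding QS_def using bs by simp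
  have E0: "E > 0" unfolding E_def using e by (simp add: one_less_power)
  have al2: "al^2 = a^2+d^2+e^2+2*a*d*e-1" unfolding al_def
    using Delta_pos[OF a d e] by (simp add: Delta_def)
  have K0: "\<not> K > 0"
  proof
    assume "K > 0"
    then show False using rho[OF t q s a d e] nc unfolding K_def by blast
  qed
  have le: "E*q*s/t \<le> u - al*QS" using nc unfolding E_def u_def al_def QS_def by simp
  then have "E*q*s - u*t \<le> -(al*QS*t)" using t by (simp add: field_simps)
  moreover have alQS: "al*QS*t \<ge> 0" using t al0 QS0 by simp
  ultimately have "(al*QS*t)^2 \<le> (-(E*q*s - u*t))^2" by (intro power_mono) auto
  then have "(al*QS*t)^2 \<le> (E*q*s - u*t)^2" by (simp only: power2_minus)
  then have "al^2*QS^2*t^2 - (E*q*s - u*t)^2 \<le> 0" by (simp add: power_mult_distrib)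
  then have "E*(L1^2*L2^2 - K^2) \<le> 0"
    using Id[OF al2, of t q s] unfolding E_def u_def K_def L1s L2s QSs by simp
  then have "L1^2*L2^2 - K^2 \<le> 0" using E0 by (metis mult_pos_pos not_le)
  then have sqK: "(L1*L2)^2 \<le> (-K)^2" by (simp add: power_mult_distrib)
  have "0 \<le> -K" using K0 by linarith
  with sqK have "L1*L2 \<le> -K" by (rule power2_le_imp_le)
  then have "QS^2 \<le> (L1 - L2)^2" using L1s L2s QSs unfolding K_def
    by (simp add: power2_diff algebra_simps)
  then have "QS^2 \<le> \<bar>L1 - L2\<bar>^2" by simp
  then have "QS \<le> \<bar>L1 - L2\<bar>" by (rule power2_le_imp_le) simp
  then show False using H1 H2 unfolding L1_def L2_def QS_def by linarith
qed


theorem lemma4p3: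
  fixes p q r s a b c d e :: real
  assumes "p > 0" "q > 0" "r > 0" "s > 0"
    and "a > 1" "b > 1" "c > 1" "d > 1" "e > 1"
    and "f = (a*b + c*d + a*c*e + b*d*e + sqrt (Delta a d e) * sqrt (Delta b c e)) / (e^2 - 1)"
    and "sqrt (Delta b c e) / p + sqrt (Delta a d e) / r
           \<le> sqrt (Delta c d f) / q + sqrt (Delta a b f) / s"
    and "edge_len q r b < edge_len q s e + edge_len r s c"
    and "edge_len r s c < edge_len q s e + edge_len q r b"
  shows "edge_len p q a + edge_len s p d > edge_len q s e"
proof (rule ccontr)
  assume nc: "\<not> ?thesis"
  note pos = assms(1-9)
  define al where "al = sqrt (Delta a d e)"
  define be where "be = sqrt (Delta b c e)"
  define E where "E = e^2 - 1"
  define N where "N = a*b + c*d + a*c*e + b*d*e + al*be"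
  define QS where "QS = sqrt (q^2+s^2+2*e*q*s)"
  have E0: "E > 0" unfolding E_def using pos by (simp add: one_less_power)
  have al0: "al > 0" unfolding al_def using Delta_pos pos by simp
  have be0: "be > 0" unfolding be_def using Delta_pos pos by simp
  have al2: "al^2 = a^2+d^2+e^2+2*a*d*e-1" unfolding al_def
    using Delta_pos[of a d e] pos by (simp add: Delta_def)
  have be2: "be^2 = b^2+c^2+e^2+2*b*c*e-1" unfolding be_def
    using Delta_pos[of b c e] pos by (simp add: Delta_def)
  have fE: "f*E = N" using assms(10) E0 unfolding N_def al_def be_def E_def by simp
  have "Delta c d f * E^2 = (c^2+d^2-1)*E^2 + (f*E)^2 + 2*c*d*(f*E)*E"
    unfolding Delta_def by (simp add: algebra_simps power2_eq_square)
  also have "... = (al*(b+c*e)+be*(a+d*e))^2" unfolding fE unfolding N_def E_def using I1[OF al2 be2] by simp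
  finally have CqE0: "Delta c d f * E^2 = (al*(b+c*e)+be*(a+d*e))^2" .
  have "Delta a b f * E^2 = (a^2+b^2-1)*E^2 + (f*E)^2 + 2*a*b*(f*E)*E"
    unfolding Delta_def by (simp add: algebra_simps power2_eq_square)
  also have "... = (al*(c+b*e)+be*(d+a*e))^2" unfolding fE unfolding N_def E_def using I2[OF al2 be2] by simp
  finally have CsE0: "Delta a b f * E^2 = (al*(c+b*e)+be*(d+a*e))^2" .
  have nn1: "al*(b+c*e)+be*(a+d*e) \<ge> 0" using al0 be0 pos by (simp add: add_nonneg_nonneg)
  have nn2: "al*(c+b*e)+be*(d+a*e) \<ge> 0" using al0 be0 pos by (simp add: add_nonneg_nonneg)
  have CqE: "sqrt (Delta c d f) * E = al*(b+c*e)+be*(a+d*e)"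
  proof -
    have "sqrt (Delta c d f) * E = sqrt (Delta c d f * E^2)" using E0 by (simp add: real_sqrt_mult)
    also have "... = al*(b+c*e)+be*(a+d*e)" using CqE0 nn1 by simp
    finally show ?thesis .
  qed
  have CsE: "sqrt (Delta a b f) * E = al*(c+b*e)+be*(d+a*e)"
  proof -
    have "sqrt (Delta a b f) * E = sqrt (Delta a b f * E^2)" using E0 by (simp add: real_sqrt_mult)
    also have "... = al*(c+b*e)+be*(d+a*e)" using CsE0 nn2 by simp
    finally show ?thesis .
  qed
  have e1: "edge_len p q a = sqrt (p^2+q^2+2*a*p*q)" unfolding edge_len_def by simp
  have e2: "edge_len s p d = sqrt (p^2+s^2+2*d*p*s)" unfolding edge_len_def
    by (simp add: algebra_simps)
  have e3: "edge_len q s e = sqrt (q^2+s^2+2*e*q*s)" unfolding edge_len_def by simp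
  have e4: "edge_len q r b = sqrt (r^2+q^2+2*b*r*q)" unfolding edge_len_def
    by (simp add: algebra_simps)
  have e5: "edge_len r s c = sqrt (r^2+s^2+2*c*r*s)" unfolding edge_len_def by simp
  have A: "E*q*s/p \<ge> ((a+d*e)*s+(d+a*e)*q) + al*QS"
    using lemA[OF pos(1,2,4,5,8,9)] nc unfolding e1 e2 e3 E_def al_def QS_def by simp
  have B: "E*q*s/r > ((b+c*e)*s+(c+b*e)*q) - be*QS"
    using lemB[OF pos(3,2,4,6,7,9)] assms(12,13) unfolding e3 e4 e5 E_def be_def QS_def by simp
  have hyp: "be/p + al/r \<le> sqrt (Delta c d f)/q + sqrt (Delta a b f)/s"
    using assms(11) unfolding al_def be_def .
  have Eqs: "E*q*s > 0" using E0 pos by simp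
  have "(be/p + al/r)*(E*q*s) \<le> (sqrt (Delta c d f)/q + sqrt (Delta a b f)/s)*(E*q*s)"
    using hyp Eqs by (simp add: mult_right_mono)
  moreover have "(be/p + al/r)*(E*q*s) = be*(E*q*s/p) + al*(E*q*s/r)" by (simp add: algebra_simps)
  moreover have "(sqrt (Delta c d f)/q + sqrt (Delta a b f)/s)*(E*q*s)
      = (sqrt (Delta c d f)*E)*s + (sqrt (Delta a b f)*E)*q" using pos by (simp add: field_simps)
  ultimately have H: "be*(E*q*s/p) + al*(E*q*s/r) \<le> (al*(b+c*e)+be*(a+d*e))*s + (al*(c+b*e)+be*(d+a*e))*q"
    unfolding CqE CsE by simp
  have A': "be*(E*q*s/p) \<ge> be*(((a+d*e)*s+(d+a*e)*q) + al*QS)" using A be0 by (intro mult_left_mono) auto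
  have B': "al*(E*q*s/r) > al*(((b+c*e)*s+(c+b*e)*q) - be*QS)" using B al0 by (intro mult_strict_left_mono) auto
  have eq: "be*(((a+d*e)*s+(d+a*e)*q) + al*QS) + al*(((b+c*e)*s+(c+b*e)*q) - be*QS)
     = (al*(b+c*e)+be*(a+d*e))*s + (al*(c+b*e)+be*(d+a*e))*q" by (simp add: algebra_simps)
  show False using A' B' H eq by linarith
qed

end
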